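(* Let $\alpha\in(-1,1)^N$ with $\alpha\neq0$. The set-valued map $\mathcal{F}^\alpha:\mathcal{C}(I)\rightrightarrows\mathcal{C}(I)$, $\mathcal{F}^\alpha(f)=\{f^\alpha_{\Delta,B_n(f)}:n\in\mathbb{N}\}$, is not convex, and in particular not linear.
   Context: $I=[x_0,x_N]$, $\mathcal{C}(I)$ real continuous functions with sup norm, $\Delta=\{x_0<\dots<x_N\}$, $N\ge2$, $I_i=[x_{i-1},x_i]$, $L_i(x)=a_ix+b_i$ the affine map of $I$ onto $I_i$ with $L_i(x_0)=x_{i-1}$, $L_i(x_N)=x_i$. For $f,b\in\mathcal{C}(I)$ with $b(x_0)=f(x_0)$, $b(x_N)=f(x_N)$, $f^\alpha_{\Delta,b}$ is the unique $g\in\mathcal{C}(I)$ with $g(x)=f(x)+\alpha_i(g-b)(L_i^{-1}(x))$ for $x\in I_i$. $B_n$ is the Bernstein operator $B_nf(x)=\sum_{k=0}^n f\big(x_0+\tfrac kn(x_N-x_0)\big)\binom nk\frac{(x-x_0)^k(x_N-x)^{n-k}}{(x_N-x_0)^n}$. A set-valued map $T:X\rightrightarrows Y$ is convex if $\lambda T(x_1)+(1-\lambda)T(x_2)\subseteq T(\lambda x_1+(1-\lambda)x_2)$ for all $x_1,x_2$ in its domain and $\lambda\in[0,1]$; it is linear if $\beta T(x_1)+\gamma T(x_2)\subseteq T(\beta x_1+\gamma x_2)$ for all $x_1,x_2$ in its domain and $\beta,\gamma\in\mathbb{R}$. *)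

theory Defs
  imports "HOL-Analysis.Analysis"
begin

text \<open>Elements of C(I), I = [a,b], represented as real functions continuous on I
  and equal to 0 outside I (so that equality of functions is equality in C(I)).\<close>
definition CI :: "real \<Rightarrow> real \<Rightarrow> (real \<Rightarrow> real) set" where
  "CI a b = {f. continuous_on {a..b} f \<and> (\<forall>t. t \<notin> {a..b} \<longrightarrow> f t = 0)}"

definition bernstein :: "real \<Rightarrow> real \<Rightarrow> nat \<Rightarrow> (real \<Rightarrow> real) \<Rightarrow> (real \<Rightarrow> real)" where
  "bernstein a b n f = (\<lambda>t. if t \<in> {a..b} then
     (\<Sum>k=0..n. f (a + real k / real n * (b - a)) * real (n choose k)
        * (t - a) ^ k * (b - t) ^ (n - k) / (b - a) ^ n) else 0)"

text \<open>Inverse of the affine map L_i of [x_0,x_N] onto [x_{i-1},x_i]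
  with L_i(x_0)=x_{i-1}, L_i(x_N)=x_i.\<close>
definition Linv :: "(nat \<Rightarrow> real) \<Rightarrow> nat \<Rightarrow> nat \<Rightarrow> real \<Rightarrow> real" where
  "Linv x N i y = x 0 + (y - x (i - 1)) * (x N - x 0) / (x i - x (i - 1))"

definition fif :: "(nat \<Rightarrow> real) \<Rightarrow> nat \<Rightarrow> (nat \<Rightarrow> real) \<Rightarrow> (real \<Rightarrow> real) \<Rightarrow> (real \<Rightarrow> real) \<Rightarrow> (real \<Rightarrow> real)" where
  "fif x N \<alpha> f b = (THE g. g \<in> CI (x 0) (x N) \<and>
     (\<forall>i\<in>{1..N}. \<forall>t\<in>{x (i - 1)..x i}.
        g t = f t + \<alpha> i * (g (Linv x N i t) - b (Linv x N i t))))"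

definition Fmap :: "(nat \<Rightarrow> real) \<Rightarrow> nat \<Rightarrow> (nat \<Rightarrow> real) \<Rightarrow> (real \<Rightarrow> real) \<Rightarrow> (real \<Rightarrow> real) set" where
  "Fmap x N \<alpha> f = {fif x N \<alpha> f (bernstein (x 0) (x N) n f) | n. n \<ge> 1}"

definition convex_svm :: "(real \<Rightarrow> real) set \<Rightarrow> ((real \<Rightarrow> real) \<Rightarrow> (real \<Rightarrow> real) set) \<Rightarrow> bool" where
  "convex_svm D T \<longleftrightarrow> (\<forall>f1\<in>D. \<forall>f2\<in>D. \<forall>l\<in>{0..1::real}.
     {(\<lambda>t. l * g1 t + (1 - l) * g2 t) | g1 g2. g1 \<in> T f1 \<and> g2 \<in> T f2}
       \<subseteq> T (\<lambda>t. l * f1 t + (1 - l) * f2 t))"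

definition linear_svm :: "(real \<Rightarrow> real) set \<Rightarrow> ((real \<Rightarrow> real) \<Rightarrow> (real \<Rightarrow> real) set) \<Rightarrow> bool" where
  "linear_svm D T \<longleftrightarrow> (\<forall>f1\<in>D. \<forall>f2\<in>D. \<forall>\<beta>::real. \<forall>\<gamma>::real.
     {(\<lambda>t. \<beta> * g1 t + \<gamma> * g2 t) | g1 g2. g1 \<in> T f1 \<and> g2 \<in> T f2}
       \<subseteq> T (\<lambda>t. \<beta> * f1 t + \<gamma> * f2 t))"

end

theory Submission
  imports Defs
begin

lemma xmono_le:
  assumes mono: "\<And>i. i < N \<Longrightarrow> x i < x (Suc i)"
  shows "i \<le> j \<Longrightarrow> j \<le> N \<Longrightarrow> (x i :: real) \<le> x j"
proof (induction j)
  case 0 then show ?case by simp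
next
  case (Suc j)
  show ?case
  proof (cases "i = Suc j")
    case False
    then have "i \<le> j" using Suc by simp
    then have "x i \<le> x j" using Suc by simp
    also have "x j < x (Suc j)" using mono Suc by simp
    finally show ?thesis by simp
  qed simp
qed

lemma xmono_less:
  assumes mono: "\<And>i. i < N \<Longrightarrow> x i < x (Suc i)"
  shows "i < j \<Longrightarrow> j \<le> N \<Longrightarrow> (x i :: real) < x j"
proof -
  assume a: "i < j" "j \<le> N"
  then obtain k where k: "j = Suc k" by (cases j) auto
  have "x i \<le> x k" using xmono_le[where N=N and x=x, OF mono, of i k] a k by simp
  also have "x k < x (Suc k)" using mono a k by simp
  finally show ?thesis using k by simp
qed

lemma Linv_in:
  assumes mono: "\<And>i. i < N \<Longrightarrow> x i < x (Suc i)"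
    and i: "i \<in> {1..N}" and t: "t \<in> {x (i - 1)..x i}"
  shows "Linv x N i t \<in> {x 0..x N}"
proof -
  have h: "x (i - 1) < x i" using xmono_less[where N=N and x=x, OF mono, of "i-1" i] i by auto
  have w: "x 0 < x N" using xmono_less[where N=N and x=x, OF mono, of 0 N] i by auto
  define u where "u = (t - x (i - 1)) / (x i - x (i - 1))"
  have u: "0 \<le> u" "u \<le> 1" using h t by (auto simp: u_def)
  have "0 \<le> u * (x N - x 0)" "u * (x N - x 0) \<le> 1 * (x N - x 0)"
    using u w by (auto intro: mult_right_mono)
  moreover have "Linv x N i t = x 0 + u * (x N - x 0)" unfolding Linv_def u_def by simp
  ultimately show ?thesis by auto
qed

lemma Linv_left: "x (i - 1) < x i \<Longrightarrow> Linv x N i (x (i - 1)) = x 0"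
  unfolding Linv_def by simp

lemma Linv_right: "x (i - 1) < x i \<Longrightarrow> Linv x N i (x i) = x N"
  unfolding Linv_def by simp

definition idx :: "(nat \<Rightarrow> real) \<Rightarrow> real \<Rightarrow> nat" where
  "idx x t = (LEAST i. 1 \<le> i \<and> t \<le> x i)"

lemma idx_props:
  assumes mono: "\<And>i. i < N \<Longrightarrow> x i < x (Suc i)" and N: "N \<ge> 1"
    and t: "t \<in> {x 0..x N}"
  shows "idx x t \<in> {1..N}" "t \<in> {x (idx x t - 1)..x (idx x t)}"
proof -
  let ?P = "\<lambda>i. 1 \<le> i \<and> t \<le> x i"
  have PN: "?P N" using N t by auto
  have P: "?P (idx x t)" unfolding idx_def by (rule LeastI[of ?P N, OF PN])
  have le: "idx x t \<le> N" unfolding idx_def by (rule Least_le[of ?P N, OF PN])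
  show "idx x t \<in> {1..N}" using P le by auto
  have "x (idx x t - 1) \<le> t"
  proof (cases "idx x t = 1")
    case True then show ?thesis using t by simp
  next
    case False
    then have "idx x t - 1 < idx x t" "1 \<le> idx x t - 1" using P by auto
    then have "\<not> ?P (idx x t - 1)" unfolding idx_def using not_less_Least by blast
    then show ?thesis using \<open>1 \<le> idx x t - 1\<close> by auto
  qed
  then show "t \<in> {x (idx x t - 1)..x (idx x t)}" using P by auto
qed


definition Op :: "(nat \<Rightarrow> real) \<Rightarrow> nat \<Rightarrow> (nat \<Rightarrow> real) \<Rightarrow> (real \<Rightarrow> real) \<Rightarrow> (real \<Rightarrow> real) \<Rightarrow> (real \<Rightarrow> real) \<Rightarrow> real \<Rightarrow> real" where
  "Op x N \<alpha> f b g t = (if t \<in> {x 0..x N} then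
     f t + \<alpha> (idx x t) * (g (Linv x N (idx x t) t) - b (Linv x N (idx x t) t)) else 0)"

locale fsetup =
  fixes x :: "nat \<Rightarrow> real" and N :: nat and \<alpha> :: "nat \<Rightarrow> real"
  assumes N: "N \<ge> 1"
    and mono: "\<And>i. i < N \<Longrightarrow> x i < x (Suc i)"
    and alpha: "\<And>i. i \<in> {1..N} \<Longrightarrow> \<alpha> i \<in> {-1<..<1}"
begin

lemma step: "i \<in> {1..N} \<Longrightarrow> x (i - 1) < x i"
  using xmono_less[where N=N and x=x, OF mono, of "i-1" i] by auto

lemma w: "x 0 < x N"
  using xmono_less[where N=N and x=x, OF mono, of 0 N] N by auto

lemma sub: "i \<in> {1..N} \<Longrightarrow> {x (i - 1)..x i} \<subseteq> {x 0..x N}"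
  using xmono_le[where N=N and x=x, OF mono, of 0 "i-1"] xmono_le[where N=N and x=x, OF mono, of i N]
  by auto

lemma Op_eq:
  assumes i: "i \<in> {1..N}" and t: "t \<in> {x (i - 1)..x i}"
    and e0: "g (x 0) = b (x 0)" and eN: "g (x N) = b (x N)"
  shows "Op x N \<alpha> f b g t = f t + \<alpha> i * (g (Linv x N i t) - b (Linv x N i t))"
proof -
  have tI: "t \<in> {x 0..x N}" using sub[OF i] t by auto
  define j where "j = idx x t"
  have j: "j \<in> {1..N}" "t \<in> {x (j - 1)..x j}" using idx_props[where N=N and x=x, OF mono N tI] j_def by auto
  have jle: "j \<le> i" unfolding j_def idx_def
    by (rule Least_le[of "\<lambda>i. 1 \<le> i \<and> t \<le> x i"]) (use i t in auto)
  show ?thesis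
  proof (cases "j = i")
    case True then show ?thesis unfolding Op_def j_def using tI by simp
  next
    case False
    then have "j \<le> i - 1" using jle by auto
    then have "x j \<le> x (i - 1)" using xmono_le[where N=N and x=x, OF mono, of j "i-1"] i by auto
    then have tj: "t = x j" "t = x (i - 1)" using j t by auto
    have "j = i - 1"
    proof (rule ccontr)
      assume "j \<noteq> i - 1"
      then have "j < i - 1" using \<open>j \<le> i - 1\<close> by auto
      then have "x j < x (i - 1)" using xmono_less[where N=N and x=x, OF mono, of j "i-1"] i by auto
      then show False using tj by auto
    qed
    have L1: "Linv x N j t = x N" using tj Linv_right[of x j N] step[OF j(1)] by simp
    have L2: "Linv x N i t = x 0" using tj Linv_left[of x i N] step[OF i] by simp
    show ?thesis unfolding Op_def j_def[symmetric] using tI L1 L2 e0 eN by simp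
  qed
qed

lemma Op_contr:
  assumes M: "\<forall>s\<in>{x 0..x N}. \<bar>g1 s - g2 s\<bar> \<le> M" and q: "\<forall>i\<in>{1..N}. \<bar>\<alpha> i\<bar> \<le> q"
    and t: "t \<in> {x 0..x N}"
  shows "\<bar>Op x N \<alpha> f b g1 t - Op x N \<alpha> f b g2 t\<bar> \<le> q * M"
proof -
  define j where "j = idx x t"
  have j: "j \<in> {1..N}" "t \<in> {x (j - 1)..x j}" using idx_props[where N=N and x=x, OF mono N t] j_def by auto
  define s where "s = Linv x N j t"
  have s: "s \<in> {x 0..x N}" unfolding s_def by (rule Linv_in[where N=N and x=x, OF mono j])
  have "Op x N \<alpha> f b g1 t - Op x N \<alpha> f b g2 t = \<alpha> j * (g1 s - g2 s)"
    unfolding Op_def j_def[symmetric] s_def using t by (simp add: algebra_simps)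
  then have "\<bar>Op x N \<alpha> f b g1 t - Op x N \<alpha> f b g2 t\<bar> = \<bar>\<alpha> j\<bar> * \<bar>g1 s - g2 s\<bar>"
    by (simp add: abs_mult)
  also have "\<dots> \<le> q * M"
    using M s q j(1) by (intro mult_mono) auto
  finally show ?thesis .
qed


lemma I_union: "{x 0..x N} = (\<Union>i\<in>{1..N}. {x (i - 1)..x i})"
proof
  show "{x 0..x N} \<subseteq> (\<Union>i\<in>{1..N}. {x (i - 1)..x i})"
  proof
    fix t assume tI: "t \<in> {x 0..x N}"
    show "t \<in> (\<Union>i\<in>{1..N}. {x (i - 1)..x i})" using idx_props[where N=N and x=x, OF mono N tI] by blast
  qed
  show "(\<Union>i\<in>{1..N}. {x (i - 1)..x i}) \<subseteq> {x 0..x N}" using sub by blast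
qed

lemma cont_comp_Linv:
  assumes i: "i \<in> {1..N}" and g: "continuous_on {x 0..x N} g"
  shows "continuous_on {x (i - 1)..x i} (\<lambda>t. g (Linv x N i t))"
proof (rule continuous_on_compose2[OF g])
  show "continuous_on {x (i - 1)..x i} (Linv x N i)"
    unfolding Linv_def by (intro continuous_intros) (use step[OF i] in auto)
  show "Linv x N i ` {x (i - 1)..x i} \<subseteq> {x 0..x N}" using Linv_in[where N=N and x=x, OF mono i] by auto
qed

lemma Op_cont:
  assumes f: "continuous_on {x 0..x N} f" and b: "continuous_on {x 0..x N} b"
    and g: "continuous_on {x 0..x N} g"
    and e0: "g (x 0) = b (x 0)" and eN: "g (x N) = b (x N)"
  shows "continuous_on {x 0..x N} (Op x N \<alpha> f b g)"
  unfolding I_union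
proof (rule continuous_on_closed_Union)
  fix i assume i: "i \<in> {1..N}"
  have "continuous_on {x (i - 1)..x i} (\<lambda>t. f t + \<alpha> i * (g (Linv x N i t) - b (Linv x N i t)))"
    using cont_comp_Linv[OF i g] cont_comp_Linv[OF i b] continuous_on_subset[OF f sub[OF i]]
    by (intro continuous_intros) auto
  then show "continuous_on {x (i - 1)..x i} (Op x N \<alpha> f b g)"
    by (rule continuous_on_cong[THEN iffD1, rotated -1]) (use Op_eq[OF i _ e0 eN] in auto)
qed auto

lemma Op_end:
  assumes e0: "g (x 0) = b (x 0)" and eN: "g (x N) = b (x N)"
  shows "Op x N \<alpha> f b g (x 0) = f (x 0)" "Op x N \<alpha> f b g (x N) = f (x N)"
proof -
  have i1: "1 \<in> {1..N}" using N by auto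
  have "Op x N \<alpha> f b g (x 0) = f (x 0) + \<alpha> 1 * (g (Linv x N 1 (x 0)) - b (Linv x N 1 (x 0)))"
    using Op_eq[OF i1 _ e0 eN, of "x 0"] step[OF i1] by simp
  also have "Linv x N 1 (x 0) = x 0" using Linv_left[of x 1 N] step[OF i1] by simp
  finally show "Op x N \<alpha> f b g (x 0) = f (x 0)" using e0 by simp
  have iN: "N \<in> {1..N}" using N by auto
  have "Op x N \<alpha> f b g (x N) = f (x N) + \<alpha> N * (g (Linv x N N (x N)) - b (Linv x N N (x N)))"
    using Op_eq[OF iN _ e0 eN, of "x N"] step[OF iN] by simp
  also have "Linv x N N (x N) = x N" using Linv_right[of x N N] step[OF iN] by simp
  finally show "Op x N \<alpha> f b g (x N) = f (x N)" using eN by simp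
qed


lemma qbound: "\<exists>q. 0 \<le> q \<and> q < 1 \<and> (\<forall>i\<in>{1..N}. \<bar>\<alpha> i\<bar> \<le> q)"
proof -
  define q where "q = Max ((\<lambda>i. \<bar>\<alpha> i\<bar>) ` {1..N})"
  have ne: "(\<lambda>i. \<bar>\<alpha> i\<bar>) ` {1..N} \<noteq> {}" using N by auto
  have "q \<in> (\<lambda>i. \<bar>\<alpha> i\<bar>) ` {1..N}" unfolding q_def by (rule Max_in) (use ne in auto)
  then have "q < 1" "0 \<le> q" using alpha by (auto simp: abs_less_iff)
  moreover have "\<forall>i\<in>{1..N}. \<bar>\<alpha> i\<bar> \<le> q" unfolding q_def by (auto intro: Max_ge)
  ultimately show ?thesis by blast
qed

lemma exist:
  assumes f: "continuous_on {x 0..x N} f" and b: "continuous_on {x 0..x N} b"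
    and bf0: "b (x 0) = f (x 0)" and bfN: "b (x N) = f (x N)"
  shows "\<exists>g. g \<in> CI (x 0) (x N) \<and> (\<forall>i\<in>{1..N}. \<forall>t\<in>{x (i - 1)..x i}.
        g t = f t + \<alpha> i * (g (Linv x N i t) - b (Linv x N i t)))"
proof -
  obtain q where q: "0 \<le> q" "q < 1" "\<forall>i\<in>{1..N}. \<bar>\<alpha> i\<bar> \<le> q" using qbound by blast
  let ?I = "{x 0..x N}"
  define G where "G k = (Op x N \<alpha> f b ^^ k) f" for k
  have GS: "G (Suc k) = Op x N \<alpha> f b (G k)" for k unfolding G_def by simp
  have inv: "continuous_on ?I (G k) \<and> G k (x 0) = f (x 0) \<and> G k (x N) = f (x N)" for k
  proof (induction k)
    case 0 then show ?case using f by (simp add: G_def)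
  next
    case (Suc k)
    then have e: "G k (x 0) = b (x 0)" "G k (x N) = b (x N)" using bf0 bfN by auto
    show ?case unfolding GS using Op_cont[OF f b _ e] Op_end[OF e] Suc by auto
  qed
  have "compact ((\<lambda>t. G 1 t - G 0 t) ` ?I)"
    by (rule compact_continuous_image) (use inv in \<open>auto intro!: continuous_intros\<close>)
  then obtain M0 where M0: "\<forall>t\<in>?I. \<bar>G 1 t - G 0 t\<bar> \<le> M0"
  proof -
    have "bounded ((\<lambda>t. G 1 t - G 0 t) ` ?I)" using \<open>compact _\<close> by (rule compact_imp_bounded)
    then obtain B where "\<forall>y\<in>(\<lambda>t. G 1 t - G 0 t) ` ?I. norm y \<le> B" unfolding bounded_iff by blast
    then show ?thesis using that by auto
  qed
  have bnd: "\<forall>t\<in>?I. \<bar>G (Suc k) t - G k t\<bar> \<le> q ^ k * M0" for k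
  proof (induction k)
    case 0 then show ?case using M0 by simp
  next
    case (Suc k)
    show ?case
    proof
      fix t assume t: "t \<in> ?I"
      have "\<bar>Op x N \<alpha> f b (G (Suc k)) t - Op x N \<alpha> f b (G k) t\<bar> \<le> q * (q ^ k * M0)"
        by (rule Op_contr[OF Suc q(3) t])
      then show "\<bar>G (Suc (Suc k)) t - G (Suc k) t\<bar> \<le> q ^ Suc k * M0"
        unfolding GS[of "Suc k"] GS[of k] by (simp add: algebra_simps)
    qed
  qed
  have summ: "summable (\<lambda>k. q ^ k * M0)"
    by (rule summable_mult2) (use q in \<open>simp add: summable_geometric\<close>)
  define h where "h t = suminf (\<lambda>i. G (Suc i) t - G i t)" for t
  have ul0: "uniform_limit ?I (\<lambda>n t. \<Sum>i<n. G (Suc i) t - G i t) h sequentially"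
    unfolding h_def by (rule Weierstrass_m_test[OF _ summ]) (use bnd in auto)
  have tel: "(\<lambda>n t. \<Sum>i<n. G (Suc i) t - G i t) = (\<lambda>n t. G n t - G 0 t)"
    by (intro ext) (rule sum_lessThan_telescope[where f="\<lambda>k. G k t" for t])
  have ul: "uniform_limit ?I (\<lambda>n t. G n t - G 0 t) h sequentially" using ul0 tel by simp
  have hc: "continuous_on ?I h"
    by (rule uniform_limit_theorem[OF _ ul]) (use inv in \<open>auto intro!: always_eventually continuous_intros\<close>)
  have lim: "(\<lambda>n. G n t) \<longlonglongrightarrow> f t + h t" if t: "t \<in> ?I" for t
  proof -
    have "(\<lambda>n. G n t - G 0 t) \<longlonglongrightarrow> h t" by (rule tendsto_uniform_limitI[OF ul t])
    then have "(\<lambda>n. (G n t - G 0 t) + G 0 t) \<longlonglongrightarrow> h t + G 0 t" by (intro tendsto_intros)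
    then show ?thesis by (simp add: G_def add.commute)
  qed
  define g where "g t = (if t \<in> ?I then f t + h t else 0)" for t
  have gCI: "g \<in> CI (x 0) (x N)"
    unfolding CI_def
  proof (intro CollectI conjI allI impI)
    have "continuous_on ?I (\<lambda>t. f t + h t)" using f hc by (intro continuous_intros)
    then show "continuous_on ?I g" by (rule continuous_on_cong[THEN iffD1, rotated -1]) (auto simp: g_def)
  qed (auto simp: g_def)
  have eq: "g t = f t + \<alpha> i * (g (Linv x N i t) - b (Linv x N i t))"
    if i: "i \<in> {1..N}" and t: "t \<in> {x (i - 1)..x i}" for i t
  proof -
    have tI: "t \<in> ?I" using sub[OF i] t by auto
    have LI: "Linv x N i t \<in> ?I" by (rule Linv_in[where N=N and x=x, OF mono i t])
    have e: "G k (x 0) = b (x 0)" "G k (x N) = b (x N)" for k using inv[of k] bf0 bfN by auto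
    have rec: "G (Suc k) t = f t + \<alpha> i * (G k (Linv x N i t) - b (Linv x N i t))" for k
      unfolding GS using Op_eq[OF i t e] .
    have l1: "(\<lambda>k. G (Suc k) t) \<longlonglongrightarrow> f t + h t" using lim[OF tI] by (rule LIMSEQ_Suc)
    have l2: "(\<lambda>k. G (Suc k) t) \<longlonglongrightarrow> f t + \<alpha> i * ((f (Linv x N i t) + h (Linv x N i t)) - b (Linv x N i t))"
      unfolding rec by (intro tendsto_intros lim[OF LI])
    have "f t + h t = f t + \<alpha> i * ((f (Linv x N i t) + h (Linv x N i t)) - b (Linv x N i t))"
      using LIMSEQ_unique[OF l1 l2] .
    then show ?thesis using tI LI by (simp add: g_def)
  qed
  show ?thesis using gCI eq by blast
qed


lemma uniq:
  assumes g1: "g1 \<in> CI (x 0) (x N)" and g2: "g2 \<in> CI (x 0) (x N)"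
    and e1: "\<forall>i\<in>{1..N}. \<forall>t\<in>{x (i - 1)..x i}. g1 t = f t + \<alpha> i * (g1 (Linv x N i t) - b (Linv x N i t))"
    and e2: "\<forall>i\<in>{1..N}. \<forall>t\<in>{x (i - 1)..x i}. g2 t = f t + \<alpha> i * (g2 (Linv x N i t) - b (Linv x N i t))"
  shows "g1 = g2"
proof -
  obtain q where q: "0 \<le> q" "q < 1" "\<forall>i\<in>{1..N}. \<bar>\<alpha> i\<bar> \<le> q" using qbound by blast
  let ?I = "{x 0..x N}"
  have c: "continuous_on ?I (\<lambda>t. \<bar>g1 t - g2 t\<bar>)" using g1 g2 unfolding CI_def
    by (auto intro!: continuous_intros)
  obtain s0 where s0: "s0 \<in> ?I" "\<forall>y\<in>?I. \<bar>g1 y - g2 y\<bar> \<le> \<bar>g1 s0 - g2 s0\<bar>"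
    using continuous_attains_sup[OF compact_Icc _ c] w by auto
  define j where "j = idx x s0"
  have j: "j \<in> {1..N}" "s0 \<in> {x (j - 1)..x j}" using idx_props[where N=N and x=x, OF mono N s0(1)] j_def by auto
  define L where "L = Linv x N j s0"
  have L: "L \<in> ?I" unfolding L_def by (rule Linv_in[where N=N and x=x, OF mono j])
  have "g1 s0 = f s0 + \<alpha> j * (g1 L - b L)" "g2 s0 = f s0 + \<alpha> j * (g2 L - b L)"
    using e1 e2 j unfolding L_def by blast+
  then have "g1 s0 - g2 s0 = \<alpha> j * (g1 L - g2 L)" by (simp add: algebra_simps)
  then have "\<bar>g1 s0 - g2 s0\<bar> = \<bar>\<alpha> j\<bar> * \<bar>g1 L - g2 L\<bar>" by (simp add: abs_mult)
  also have "\<dots> \<le> q * \<bar>g1 s0 - g2 s0\<bar>" using q j s0 L by (intro mult_mono) auto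
  finally have "(1 - q) * \<bar>g1 s0 - g2 s0\<bar> \<le> 0" by (simp add: algebra_simps)
  then have "\<bar>g1 s0 - g2 s0\<bar> \<le> 0" using q by (simp add: mult_le_0_iff)
  then have "\<forall>y\<in>?I. g1 y = g2 y" using s0 by fastforce
  moreover have "\<forall>y. y \<notin> ?I \<longrightarrow> g1 y = g2 y" using g1 g2 unfolding CI_def by auto
  ultimately show ?thesis by blast
qed

lemma fif_spec:
  assumes f: "continuous_on {x 0..x N} f" and b: "continuous_on {x 0..x N} b"
    and bf0: "b (x 0) = f (x 0)" and bfN: "b (x N) = f (x N)"
  shows "fif x N \<alpha> f b \<in> CI (x 0) (x N) \<and> (\<forall>i\<in>{1..N}. \<forall>t\<in>{x (i - 1)..x i}.
        fif x N \<alpha> f b t = f t + \<alpha> i * (fif x N \<alpha> f b (Linv x N i t) - b (Linv x N i t)))"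
proof -
  define P where "P g \<longleftrightarrow> g \<in> CI (x 0) (x N) \<and> (\<forall>i\<in>{1..N}. \<forall>t\<in>{x (i - 1)..x i}.
        g t = f t + \<alpha> i * (g (Linv x N i t) - b (Linv x N i t)))" for g
  have "\<exists>!g. P g" unfolding P_def using exist[OF f b bf0 bfN] uniq by blast
  then have "P (THE g. P g)" by (rule theI')
  then show ?thesis unfolding fif_def P_def .
qed

end


lemma alg_aux:
  fixes w u m :: real
  assumes "w > 0" "m > 0"
  shows "w^2 / m^2 * (m * (m - 1) * (u / w)\<^sup>2 + m * (u / w)) = u^2 + u * (w - u) / m"
proof -
  have "w^2 / m^2 * (m * (m - 1) * (u / w)\<^sup>2 + m * (u / w)) = (m - 1) * u^2 / m + u * w / m"
    using assms by (simp add: power2_eq_square field_simps)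
  also have "\<dots> = u^2 + u * (w - u) / m" using assms by (simp add: power2_eq_square field_simps)
  finally show ?thesis .
qed

lemma bern_sq:
  fixes a c t :: real
  assumes ac: "a < c" and n: "n \<ge> 1" and t: "t \<in> {a..c}"
  shows "bernstein a c n (\<lambda>t. if t \<in> {a..c} then (t - a)^2 else 0) t
         = (t - a)^2 + (t - a) * (c - t) / real n"
proof -
  define p where "p = (t - a) / (c - a)"
  have p1: "(c - t) / (c - a) = 1 - p" unfolding p_def using ac by (simp add: field_simps)
  have trm: "(if a + real k / real n * (c - a) \<in> {a..c} then (a + real k / real n * (c - a) - a)^2 else 0)
        * real (n choose k) * (t - a) ^ k * (c - t) ^ (n - k) / (c - a) ^ n
      = (c - a)^2 / (real n)^2 * (real k * real k * Bernstein n k p)" if k: "k \<in> {0..n}" for k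
  proof -
    have kn: "real k / real n \<le> 1" "0 \<le> real k / real n" using k n by auto
    have "real k / real n * (c - a) \<le> 1 * (c - a)" using kn ac by (intro mult_right_mono) auto
    then have node: "a + real k / real n * (c - a) \<in> {a..c}" using kn ac by auto
    have pw: "(c - a) ^ n = (c - a) ^ k * (c - a) ^ (n - k)" using k by (simp add: power_add[symmetric])
    have "(t - a) ^ k * (c - t) ^ (n - k) / (c - a) ^ n = ((t - a) / (c - a)) ^ k * ((c - t) / (c - a)) ^ (n - k)"
      unfolding pw power_divide by simp
    also have "\<dots> = p ^ k * (1 - p) ^ (n - k)" using p1 p_def by simp
    finally have e: "(t - a) ^ k * (c - t) ^ (n - k) / (c - a) ^ n = p ^ k * (1 - p) ^ (n - k)" .
    have "(if a + real k / real n * (c - a) \<in> {a..c} then (a + real k / real n * (c - a) - a)^2 else 0)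
        * real (n choose k) * (t - a) ^ k * (c - t) ^ (n - k) / (c - a) ^ n
       = (real k / real n * (c - a))^2 * real (n choose k) * ((t - a) ^ k * (c - t) ^ (n - k) / (c - a) ^ n)"
      using node by simp
    also have "\<dots> = (real k / real n * (c - a))^2 * real (n choose k) * (p ^ k * (1 - p) ^ (n - k))"
      using e by simp
    also have "\<dots> = (c - a)^2 / (real n)^2 * (real k * real k * Bernstein n k p)"
      unfolding Bernstein_def by (simp add: power2_eq_square field_simps)
    finally show ?thesis .
  qed
  have "bernstein a c n (\<lambda>t. if t \<in> {a..c} then (t - a)^2 else 0) t
      = (\<Sum>k=0..n. (c - a)^2 / (real n)^2 * (real k * real k * Bernstein n k p))"
    unfolding bernstein_def using t by (simp only: if_True) (rule sum.cong[OF refl trm])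
  also have "\<dots> = (c - a)^2 / (real n)^2 * (\<Sum>k\<le>n. real k * real k * Bernstein n k p)"
    by (simp only: atLeast0AtMost sum_distrib_left)
  also have "(\<Sum>k\<le>n. real k * real k * Bernstein n k p) = real n * (real n - 1) * p\<^sup>2 + real n * p"
  proof -
    have "(\<Sum>k\<le>n. real k * real k * Bernstein n k p) = (\<Sum>k\<le>n. real k * (real k - 1) * Bernstein n k p + real k * Bernstein n k p)"
      by (rule sum.cong) (auto simp: algebra_simps)
    then show ?thesis by (simp add: sum.distrib)
  qed
  also have "(c - a)^2 / (real n)^2 * (real n * (real n - 1) * p\<^sup>2 + real n * p) = (t - a)^2 + (t - a) * (c - t) / real n"
    unfolding p_def using alg_aux[of "c - a" "real n" "t - a"] ac n by (simp add: algebra_simps)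
  finally show ?thesis .
qed


lemma lin_imp_conv: "linear_svm D T \<Longrightarrow> convex_svm D T"
  unfolding linear_svm_def convex_svm_def by blast

theorem mainTheorem14:
  fixes x :: "nat \<Rightarrow> real" and N :: nat and \<alpha> :: "nat \<Rightarrow> real"
  assumes "N \<ge> 2"
    and "\<And>i. i < N \<Longrightarrow> x i < x (Suc i)"
    and "\<And>i. i \<in> {1..N} \<Longrightarrow> \<alpha> i \<in> {-1<..<1}"
    and "\<exists>i\<in>{1..N}. \<alpha> i \<noteq> 0"
  shows "\<not> convex_svm (CI (x 0) (x N)) (Fmap x N \<alpha>)
       \<and> \<not> linear_svm (CI (x 0) (x N)) (Fmap x N \<alpha>)"
proof -
  interpret fsetup x N \<alpha> using assms by unfold_locales auto
  define a where "a = x 0"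
  define c where "c = x N"
  have ac: "a < c" using w unfolding a_def c_def .
  define f0 where "f0 t = (if t \<in> {a..c} then (t - a)^2 else 0)" for t
  have f0c: "continuous_on {a..c} f0"
  proof -
    have "continuous_on {a..c} (\<lambda>t. (t - a)^2)" by (intro continuous_intros)
    then show ?thesis by (rule continuous_on_cong[THEN iffD1, rotated -1]) (auto simp: f0_def)
  qed
  have f0CI: "f0 \<in> CI a c" unfolding CI_def using f0c by (auto simp: f0_def)
  define B where "B n = bernstein a c n f0" for n
  have BE: "B n t = (t - a)^2 + (t - a) * (c - t) / real n" if "n \<ge> 1" "t \<in> {a..c}" for n t
    unfolding B_def f0_def using bern_sq[OF ac that] .
  have Bc: "continuous_on {a..c} (B n)" if n: "n \<ge> 1" for n
  proof -
    have "continuous_on {a..c} (\<lambda>t. (t - a)^2 + (t - a) * (c - t) / real n)" by (intro continuous_intros) (use n in auto)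
    then show ?thesis by (rule continuous_on_cong[THEN iffD1, rotated -1]) (use BE[OF n] in auto)
  qed
  have Ba: "B n a = f0 a" and Bcc: "B n c = f0 c" if n: "n \<ge> 1" for n
    using BE[OF n, of a] BE[OF n, of c] ac by (auto simp: f0_def)
  define F where "F n = fif x N \<alpha> f0 (B n)" for n
  have spec: "\<forall>i\<in>{1..N}. \<forall>t\<in>{x (i - 1)..x i}. F n t = f0 t + \<alpha> i * (F n (Linv x N i t) - B n (Linv x N i t))"
    if n: "n \<ge> 1" for n
    using fif_spec[of f0 "B n"] f0c Bc[OF n] Ba[OF n] Bcc[OF n] unfolding F_def a_def c_def by auto
  have FM: "F n \<in> Fmap x N \<alpha> f0" if "n \<ge> 1" for n
    unfolding Fmap_def F_def B_def a_def c_def using that by auto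
  have nconv: "\<not> convex_svm (CI (x 0) (x N)) (Fmap x N \<alpha>)"
  proof
    assume cv: "convex_svm (CI (x 0) (x N)) (Fmap x N \<alpha>)"
    have ff: "(\<lambda>t. 1/2 * f0 t + (1 - 1/2) * f0 t) = f0" by auto
    have "(\<lambda>t. 1/2 * F 1 t + (1 - 1/2) * F 2 t) \<in> Fmap x N \<alpha> (\<lambda>t. 1/2 * f0 t + (1 - 1/2) * f0 t)"
      using cv f0CI FM[of 1] FM[of 2] unfolding convex_svm_def a_def c_def
      by (fastforce dest!: bspec[of _ _ f0] bspec[of _ _ "1/2"])
    then obtain k where k: "k \<ge> 1" and avg: "(\<lambda>t. 1/2 * F 1 t + (1 - 1/2) * F 2 t) = F k"
      unfolding ff Fmap_def F_def B_def a_def c_def by auto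
    obtain i where i: "i \<in> {1..N}" and ai: "\<alpha> i \<noteq> 0" using assms(4) by blast
    define t where "t = (x (i - 1) + x i) / 2"
    define m where "m = (a + c) / 2"
    have h: "x (i - 1) < x i" using step[OF i] .
    have t: "t \<in> {x (i - 1)..x i}" using h unfolding t_def by auto
    have Lt: "Linv x N i t = m" unfolding Linv_def t_def m_def a_def c_def using h
      by (simp add: field_simps)
    have e1: "F 1 t = f0 t + \<alpha> i * (F 1 m - B 1 m)" using spec[of 1] i t Lt by auto
    have e2: "F 2 t = f0 t + \<alpha> i * (F 2 m - B 2 m)" using spec[of 2] i t Lt by auto
    have e3: "F k t = f0 t + \<alpha> i * (F k m - B k m)" using spec[OF k] i t Lt by auto
    have g3: "F k s = (F 1 s + F 2 s) / 2" for s using fun_cong[OF avg, of s] by simp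
    have "\<alpha> i * (B k m - (B 1 m + B 2 m) / 2) = 0"
    proof -
      have q1: "\<alpha> i * B 1 m = f0 t + \<alpha> i * F 1 m - F 1 t" using e1 by (simp add: algebra_simps)
      have q2: "\<alpha> i * B 2 m = f0 t + \<alpha> i * F 2 m - F 2 t" using e2 by (simp add: algebra_simps)
      have q3: "\<alpha> i * B k m = f0 t + \<alpha> i * ((F 1 m + F 2 m) / 2) - (F 1 t + F 2 t) / 2"
        using e3 g3[of t] g3[of m] by (simp add: algebra_simps)
      have "\<alpha> i * (B k m - (B 1 m + B 2 m) / 2) = \<alpha> i * B k m - (\<alpha> i * B 1 m + \<alpha> i * B 2 m) / 2"
        by (simp add: algebra_simps)
      also have "\<dots> = 0" unfolding q1 q2 q3 by (simp add: field_simps)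
      finally show ?thesis .
    qed
    then have eqB: "B k m = (B 1 m + B 2 m) / 2" using ai by simp
    have mI: "m \<in> {a..c}" using ac unfolding m_def by auto
    have mv: "B n m = (c - a)^2 / 4 + (c - a)^2 / (4 * real n)" if "n \<ge> 1" for n
      using BE[OF that mI] unfolding m_def by (simp add: field_simps power2_eq_square)
    have "(c - a)^2 / (4 * real k) = (c - a)^2 * 3 / 16"
      using eqB mv[OF k] mv[of 1] mv[of 2] by simp
    then have "3 * real k = 4" using ac k by (simp add: field_simps)
    then have "3 * k = 4" by linarith
    then show False by presburger
  qed
  show ?thesis using nconv lin_imp_conv by blast
qed

end
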